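(* Let $(A,B)$ be a Katsura pair with $B\in M_N(\{0,1\})$ and KEP-action $(G_B,E_A)$. For $\mu,\nu\in E_A^{-\infty}$, $\mu\sim_e\nu$ if and only if either $\mu=\nu$, or there is $K<0$ such that $s(\mu_k)=s(\nu_k)=:v_k$ for all $k\le K$ and $B_{v_{k-1},v_k}=1$ for all $k\le K$, and, if $K<-1$, $B_{v_K,v_{K+1}}=0$ and $\mu_{K+1}\cdots\mu_{-1}=\nu_{K+1}\cdots\nu_{-1}$.
   Context: Katsura pair: $N\in\mathbb{N}$, $A\in M_N(\mathbb{N})$ (nonnegative integers), $B\in M_N(\mathbb{Z})$ with $A_{ij}=0\Rightarrow B_{ij}=0$. Graph $E_A$: vertices $\{1,\dots,N\}$, edges $e_{i,j,m}$ ($0\le m<A_{ij}$), $r=i$, $s=j$. $E_A^{-\infty}$ is the set of left-infinite paths $\mu=\cdots\mu_{-2}\mu_{-1}$ with $s(\mu_k)=r(\mu_{k+1})$ (so $r(\mu_k)=s(\mu_{k-1})$). The group bundle $\mathbb{Z}\times E_A^0$ (elements $a_i^k$) acts by $a_i^k\cdot e_{i,j,m}=e_{i,j,\hat m}$, $a_i^k|_{e_{i,j,m}}=a_j^{\hat k}$ where $kB_{ij}+m=\hat kA_{ij}+\hat m$, $0\le\hat m<A_{ij}$, extended to finite paths by $g\cdot(e\nu)=(g\cdot e)(g|_e\cdot\nu)$; $G_B$ is the quotient by elements acting trivially, and $(G_B,E_A)$ is the KEP-action. $\mu\sim_e\nu$ iff there is $(g_n)_{n<0}\subseteq G_B$ with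 $d(g_n)=r(\mu_n)$ and $g_n\cdot\mu_n\cdots\mu_{-1}=\nu_n\cdots\nu_{-1}$ for all $n<0$. *)

theory Defs
  imports Main
begin

text \<open>Vertices of E_A are 1..N. An edge e_{i,j,m} is the triple (i,j,m),
  with range r = i and source s = j. Matrices are functions nat => nat => _ ,
  only entries with indices in 1..N are relevant.\<close>

type_synonym edge = "nat \<times> nat \<times> nat"

definition er :: "edge \<Rightarrow> nat" where "er e = fst e"
definition es :: "edge \<Rightarrow> nat" where "es e = fst (snd e)"

definition katsura_pair :: "nat \<Rightarrow> (nat \<Rightarrow> nat \<Rightarrow> nat) \<Rightarrow> (nat \<Rightarrow> nat \<Rightarrow> int) \<Rightarrow> bool" where
  "katsura_pair N A B \<longleftrightarrow> (\<forall>i\<in>{1..N}. \<forall>j\<in>{1..N}. A i j = 0 \<longrightarrow> B i j = 0)"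

definition is_edge :: "nat \<Rightarrow> (nat \<Rightarrow> nat \<Rightarrow> nat) \<Rightarrow> edge \<Rightarrow> bool" where
  "is_edge N A e \<longleftrightarrow> (case e of (i, j, m) \<Rightarrow> i \<in> {1..N} \<and> j \<in> {1..N} \<and> m < A i j)"

text \<open>Left-infinite paths mu = ... mu_{-2} mu_{-1}, represented as functions on int;
  only the values at negative indices matter.\<close>
definition left_inf_path :: "nat \<Rightarrow> (nat \<Rightarrow> nat \<Rightarrow> nat) \<Rightarrow> (int \<Rightarrow> edge) \<Rightarrow> bool" where
  "left_inf_path N A \<mu> \<longleftrightarrow> (\<forall>k<0. is_edge N A (\<mu> k)) \<and> (\<forall>k< -1. es (\<mu> k) = er (\<mu> (k + 1)))"

text \<open>Action of the group bundle element a_i^k (with i the range of the first edge)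
  on a finite path e_1 e_2 ... (listed left to right): a_i^k . e_{i,j,m} = e_{i,j,mhat},
  a_i^k|_{e_{i,j,m}} = a_j^{khat}, where k B_ij + m = khat A_ij + mhat, 0 <= mhat < A_ij,
  and g.(e nu) = (g.e)(g|_e . nu).\<close>
fun kep_act :: "(nat \<Rightarrow> nat \<Rightarrow> nat) \<Rightarrow> (nat \<Rightarrow> nat \<Rightarrow> int) \<Rightarrow> int \<Rightarrow> edge list \<Rightarrow> edge list" where
  "kep_act A B k [] = []"
| "kep_act A B k ((i, j, m) # p) =
     (let t = k * B i j + int m
      in (i, j, nat (t mod int (A i j))) # kep_act A B (t div int (A i j)) p)"

definition seg :: "(int \<Rightarrow> edge) \<Rightarrow> int \<Rightarrow> edge list" where
  "seg \<mu> n = map \<mu> [n..-1]"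

text \<open>mu ~_e nu: for every n < 0 there is g in G_B with d(g) = r(mu_n) and
  g . mu_n...mu_{-1} = nu_n...nu_{-1}. Every element of G_B with d(g) = r(mu_n) is
  the class of some a_{r(mu_n)}^k (k in Z), and the action on paths is the one of
  a_{r(mu_n)}^k, so this existential is over k.\<close>
definition sim_e :: "(nat \<Rightarrow> nat \<Rightarrow> nat) \<Rightarrow> (nat \<Rightarrow> nat \<Rightarrow> int) \<Rightarrow> (int \<Rightarrow> edge) \<Rightarrow> (int \<Rightarrow> edge) \<Rightarrow> bool" where
  "sim_e A B \<mu> \<nu> \<longleftrightarrow> (\<forall>n<0. \<exists>k::int. kep_act A B k (seg \<mu> n) = seg \<nu> n)"

end

theory Submission
  imports Defs
begin

definition vld :: "(nat \<Rightarrow> nat \<Rightarrow> nat) \<Rightarrow> edge list \<Rightarrow> bool" where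
  "vld A p \<longleftrightarrow> (\<forall>e\<in>set p. snd (snd e) < A (fst e) (fst (snd e)))"

lemma kep0: "vld A p \<Longrightarrow> kep_act A B 0 p = p"
proof (induction p)
  case Nil then show ?case by simp
next
  case (Cons e p)
  obtain i j m where e: "e = (i,j,m)" by (cases e) auto
  have m: "m < A i j" using Cons.prems e by (simp add: vld_def)
  have "int m mod int (A i j) = int m" using m by simp
  moreover have "int m div int (A i j) = 0" using m by simp
  moreover have "vld A p" using Cons.prems by (simp add: vld_def)
  ultimately show ?case using Cons.IH e by (simp add: Let_def)
qed

lemma kepB0: "vld A (e#q) \<Longrightarrow> B (fst e) (fst (snd e)) = 0 \<Longrightarrow>
   kep_act A B k (p @ e # q) = kep_act A B k p @ e # q"
proof (induction p arbitrary: k)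
  case Nil
  obtain i j m where e: "e = (i,j,m)" by (cases e) auto
  have m: "m < A i j" using Nil.prems e by (simp add: vld_def)
  have "int m mod int (A i j) = int m" using m by simp
  moreover have "int m div int (A i j) = 0" using m by simp
  moreover have "vld A q" using Nil.prems by (simp add: vld_def)
  ultimately show ?case using Nil.prems e kep0[of A q B] by (simp add: Let_def)
next
  case (Cons a p)
  obtain i j m where a: "a = (i,j,m)" by (cases a) auto
  show ?case using Cons a by (simp add: Let_def)
qed

lemma reach: "vld A p \<Longrightarrow> vld A q \<Longrightarrow>
  map (\<lambda>e. (fst e, fst (snd e))) p = map (\<lambda>e. (fst e, fst (snd e))) q \<Longrightarrow>
  \<forall>e\<in>set p. B (fst e) (fst (snd e)) = 1 \<Longrightarrow> \<exists>k. kep_act A B k p = q"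
proof (induction p arbitrary: q)
  case Nil then show ?case by simp
next
  case (Cons e p)
  obtain e' q' where q: "q = e' # q'" using Cons.prems(3) by (cases q) auto
  obtain i j m where e: "e = (i,j,m)" by (cases e) auto
  obtain m' where e': "e' = (i,j,m')" using Cons.prems(3) q e by (cases e') auto
  have m': "m' < A i j" using Cons.prems(2) q e' by (simp add: vld_def)
  have B1: "B i j = 1" using Cons.prems(4) e by simp
  obtain k' where k': "kep_act A B k' p = q'"
    using Cons.IH[of q'] Cons.prems q by (auto simp: vld_def)
  define k where "k = k' * int (A i j) + int m' - int m"
  have t: "k * B i j + int m = k' * int (A i j) + int m'" using B1 k_def by simp
  have "(k' * int (A i j) + int m') mod int (A i j) = int m'" using m' by simp
  moreover have "(k' * int (A i j) + int m') div int (A i j) = k'" using m' by simp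
  ultimately have "kep_act A B k (e # p) = q" using t k' e e' q by (simp add: Let_def)
  then show ?case by blast
qed

lemma seg_cons: "n < 0 \<Longrightarrow> seg \<mu> n = \<mu> n # seg \<mu> (n+1)"
  unfolding seg_def by (simp add: upto_rec1)

lemma seg_split: "n \<le> K \<Longrightarrow> K < -1 \<Longrightarrow> seg \<mu> n = map \<mu> [n..K] @ \<mu> (K+1) # seg \<mu> (K+2)"
proof -
  assume a: "n \<le> K" "K < -1"
  have "[n..-1] = [n..K+1-1] @ [K+1..-1]" using a by (intro upto_split1) auto
  also have "[K+1..-1] = (K+1) # [K+1+1..-1]" using a by (simp add: upto_rec1)
  finally show ?thesis unfolding seg_def by (simp add: add.commute add.left_commute)
qed

lemma seg_eq: "seg \<mu> n = seg \<nu> n \<Longrightarrow> n \<le> x \<Longrightarrow> x < 0 \<Longrightarrow> \<mu> x = \<nu> x"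
  unfolding seg_def by (simp add: map_eq_conv)

lemma vld_map: "left_inf_path N A \<mu> \<Longrightarrow> \<forall>x\<in>set xs. x < 0 \<Longrightarrow> vld A (map \<mu> xs)"
  unfolding vld_def left_inf_path_def is_edge_def by (auto split: prod.splits)

lemma vld_seg: "left_inf_path N A \<mu> \<Longrightarrow> vld A (seg \<mu> n)"
  unfolding seg_def by (rule vld_map) auto

lemma kep_head: "kep_act A B k (e#p) = e' # r \<Longrightarrow> fst e' = fst e \<and> fst (snd e') = fst (snd e)"
  by (cases e) (auto simp: Let_def)


theorem proposition6p2:
  fixes N :: nat and A :: "nat \<Rightarrow> nat \<Rightarrow> nat" and B :: "nat \<Rightarrow> nat \<Rightarrow> int"
    and \<mu> \<nu> :: "int \<Rightarrow> edge"
  assumes "katsura_pair N A B"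
    and "\<forall>i\<in>{1..N}. \<forall>j\<in>{1..N}. B i j \<in> {0, 1}"
    and "left_inf_path N A \<mu>" and "left_inf_path N A \<nu>"
  shows "sim_e A B \<mu> \<nu> \<longleftrightarrow>
    ((\<forall>k<0. \<mu> k = \<nu> k) \<or>
     (\<exists>K<0. (\<forall>k\<le>K. es (\<mu> k) = es (\<nu> k))
        \<and> (\<forall>k\<le>K. B (es (\<mu> (k - 1))) (es (\<mu> k)) = 1)
        \<and> (K < -1 \<longrightarrow> B (es (\<mu> K)) (es (\<mu> (K + 1))) = 0
                      \<and> (\<forall>k. K < k \<and> k < 0 \<longrightarrow> \<mu> k = \<nu> k))))"
proof -
  note B01 = assms(2) and pm = assms(3) and pn = assms(4)
  define b where "b k = B (er (\<mu> k)) (es (\<mu> k))" for k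
  have P1: "B (es (\<mu> (k - 1))) (es (\<mu> k)) = b k" if "k < 0" for k
  proof -
    have "es (\<mu> (k-1)) = er (\<mu> (k - 1 + 1))" using pm that unfolding left_inf_path_def by auto
    then show ?thesis by (simp add: b_def)
  qed
  have P2: "b k = 0 \<or> b k = 1" if "k < 0" for k
  proof -
    obtain i j m where e: "\<mu> k = (i,j,m)" by (cases "\<mu> k") auto
    have "i \<in> {1..N}" "j \<in> {1..N}" using pm that e unfolding left_inf_path_def is_edge_def by auto
    then have "B i j \<in> {0,1}" using B01 by blast
    then show ?thesis using e by (simp add: b_def er_def es_def)
  qed
  have rn: "er (\<nu> x) = es (\<nu> (x - 1))" "er (\<mu> x) = es (\<mu> (x - 1))" if "x < 0" for x
  proof -
    have "x - 1 < -1" using that by simp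
    then show "er (\<nu> x) = es (\<nu> (x - 1))" "er (\<mu> x) = es (\<mu> (x - 1))"
      using pm pn unfolding left_inf_path_def by force+
  qed
  show ?thesis
  proof
    assume sim: "sim_e A B \<mu> \<nu>"
    have src: "er (\<nu> k) = er (\<mu> k) \<and> es (\<nu> k) = es (\<mu> k)" if kk: "k < 0" for k
    proof -
      obtain c where c: "kep_act A B c (seg \<mu> k) = seg \<nu> k" using sim kk unfolding sim_e_def by blast
      then have "kep_act A B c (\<mu> k # seg \<mu> (k+1)) = \<nu> k # seg \<nu> (k+1)" using seg_cons kk by metis
      from kep_head[OF this] show ?thesis by (simp add: er_def es_def)
    qed
    have frz: "\<mu> x = \<nu> x" if kk: "k < 0" "b k = 0" "k \<le> x" "x < 0" for k x
    proof -
      obtain c where c: "kep_act A B c (seg \<mu> k) = seg \<nu> k" using sim kk unfolding sim_e_def by blast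
      have v: "vld A (\<mu> k # seg \<mu> (k+1))" using vld_seg[OF pm, of k] seg_cons[OF that(1)] by metis
      have b0: "B (fst (\<mu> k)) (fst (snd (\<mu> k))) = 0" using kk(2) by (simp add: b_def er_def es_def)
      have "kep_act A B c ([] @ \<mu> k # seg \<mu> (k+1)) = kep_act A B c [] @ \<mu> k # seg \<mu> (k+1)"
        using kepB0[of A "\<mu> k" "seg \<mu> (k+1)" B c "[]"] v b0 by blast
      then have "seg \<mu> k = seg \<nu> k" using c seg_cons[OF that(1), of \<mu>] by simp
      then show ?thesis using seg_eq that by blast
    qed
    show "(\<forall>k<0. \<mu> k = \<nu> k) \<or> (\<exists>K<0. (\<forall>k\<le>K. es (\<mu> k) = es (\<nu> k))
        \<and> (\<forall>k\<le>K. B (es (\<mu> (k - 1))) (es (\<mu> k)) = 1)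
        \<and> (K < -1 \<longrightarrow> B (es (\<mu> K)) (es (\<mu> (K + 1))) = 0
                      \<and> (\<forall>k. K < k \<and> k < 0 \<longrightarrow> \<mu> k = \<nu> k)))" (is "_ \<or> ?Q")
    proof (cases "\<forall>k<0. \<mu> k = \<nu> k")
      case True then show ?thesis by blast
    next
      case False
      then obtain d where d: "d < 0" "\<mu> d \<noteq> \<nu> d" by blast
      define S where "S = {k. k < 0 \<and> b k = 0}"
      show ?thesis
      proof (cases "S = {}")
        case True
        have "\<forall>k\<le>-1. B (es (\<mu> (k - 1))) (es (\<mu> k)) = 1"
        proof (intro allI impI)
          fix k :: int assume "k \<le> -1"
          then show "B (es (\<mu> (k - 1))) (es (\<mu> k)) = 1" using P1 P2 True unfolding S_def by force
        qed
        then have "?Q" using src by (intro exI[of _ "-1"]) auto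
        then show ?thesis by blast
      next
        case False
        have sub: "S \<subseteq> {d<..-1}"
        proof
          fix k assume k: "k \<in> S"
          have "\<not> k \<le> d" using frz[of k d] k d unfolding S_def by auto
          then show "k \<in> {d<..-1}" using k unfolding S_def by auto
        qed
        then have fin: "finite S" using finite_subset by blast
        define j where "j = Min S"
        have jS: "j \<in> S" using Min_in[OF fin False] j_def by simp
        have jmin: "\<And>k. k \<in> S \<Longrightarrow> j \<le> k" using Min_le[OF fin] j_def by simp
        have j0: "j < 0" "b j = 0" using jS unfolding S_def by auto
        have c1: "\<forall>k\<le>j-1. es (\<mu> k) = es (\<nu> k)" using src j0 by auto
        have c2: "\<forall>k\<le>j-1. B (es (\<mu> (k - 1))) (es (\<mu> k)) = 1"
        proof (intro allI impI)
          fix k :: int assume k: "k \<le> j - 1"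
          then have "k \<notin> S" using jmin by force
          moreover have "k < 0" using k j0 by simp
          ultimately show "B (es (\<mu> (k - 1))) (es (\<mu> k)) = 1" using P1[of k] P2[of k] unfolding S_def by auto
        qed
        have c3: "B (es (\<mu> (j-1))) (es (\<mu> (j - 1 + 1))) = 0" using P1 j0 by simp
        have c4: "\<forall>k. j - 1 < k \<and> k < 0 \<longrightarrow> \<mu> k = \<nu> k" using frz j0 by auto
        have "?Q" using c1 c2 c3 c4 j0 by (intro exI[of _ "j-1"]) auto
        then show ?thesis by blast
      qed
    qed
  next
    assume R: "(\<forall>k<0. \<mu> k = \<nu> k) \<or> (\<exists>K<0. (\<forall>k\<le>K. es (\<mu> k) = es (\<nu> k))
        \<and> (\<forall>k\<le>K. B (es (\<mu> (k - 1))) (es (\<mu> k)) = 1)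
        \<and> (K < -1 \<longrightarrow> B (es (\<mu> K)) (es (\<mu> (K + 1))) = 0
                      \<and> (\<forall>k. K < k \<and> k < 0 \<longrightarrow> \<mu> k = \<nu> k)))"
    have triv: "\<exists>c. kep_act A B c (seg \<mu> n) = seg \<nu> n" if "\<forall>x. n \<le> x \<and> x < 0 \<longrightarrow> \<mu> x = \<nu> x" for n
    proof -
      have "seg \<mu> n = seg \<nu> n" using that unfolding seg_def by (simp add: map_eq_conv)
      then show ?thesis using kep0[OF vld_seg[OF pm]] by metis
    qed
    show "sim_e A B \<mu> \<nu>"
      unfolding sim_e_def
    proof (intro allI impI)
      fix n :: int assume n: "n < 0"
      show "\<exists>k. kep_act A B k (seg \<mu> n) = seg \<nu> n"
      proof (cases "\<forall>k<0. \<mu> k = \<nu> k")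
        case True then show ?thesis using triv by auto
      next
        case False
        then obtain K where K: "K < 0" "\<forall>k\<le>K. es (\<mu> k) = es (\<nu> k)"
          "\<forall>k\<le>K. B (es (\<mu> (k - 1))) (es (\<mu> k)) = 1"
          "K < -1 \<longrightarrow> B (es (\<mu> K)) (es (\<mu> (K + 1))) = 0 \<and> (\<forall>k. K < k \<and> k < 0 \<longrightarrow> \<mu> k = \<nu> k)"
          using R by blast
        have rch: "\<exists>c. kep_act A B c (map \<mu> [n..m]) = map \<nu> [n..m]" if "m \<le> K" for m
        proof (rule reach)
          show "vld A (map \<mu> [n..m])" using vld_map[OF pm] that K(1) by auto
          show "vld A (map \<nu> [n..m])" using vld_map[OF pn] that K(1) by auto
          have "er (\<mu> x) = er (\<nu> x) \<and> es (\<mu> x) = es (\<nu> x)" if "x \<le> m" for x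
            using rn[of x] K(1,2) that \<open>m \<le> K\<close> by auto
          then show "map (\<lambda>e. (fst e, fst (snd e))) (map \<mu> [n..m]) =
              map (\<lambda>e. (fst e, fst (snd e))) (map \<nu> [n..m])"
            by (auto simp: map_eq_conv er_def es_def)
          have "B (er (\<mu> x)) (es (\<mu> x)) = 1" if "x \<le> m" for x
            using rn[of x] K(1,3) that \<open>m \<le> K\<close> by auto
          then show "\<forall>e\<in>set (map \<mu> [n..m]). B (fst e) (fst (snd e)) = 1"
            by (auto simp: er_def es_def)
        qed
        show ?thesis
        proof (cases "K < n")
          case True
          have "\<forall>x. n \<le> x \<and> x < 0 \<longrightarrow> \<mu> x = \<nu> x"
          proof (intro allI impI)
            fix x assume x: "n \<le> x \<and> x < 0"
            then have "K < -1" using True n by linarith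
            then show "\<mu> x = \<nu> x" using K(4) x True by auto
          qed
          then show ?thesis using triv by blast
        next
          case False
          show ?thesis
          proof (cases "K = -1")
            case True
            then have "seg \<mu> n = map \<mu> [n..K]" "seg \<nu> n = map \<nu> [n..K]" by (simp_all add: seg_def)
            then show ?thesis using rch[of K] by simp
          next
            case Km: False
            then have Kl: "K < -1" using K(1) by simp
            have sp: "seg \<mu> n = map \<mu> [n..K] @ \<mu> (K+1) # seg \<mu> (K+2)"
                 "seg \<nu> n = map \<nu> [n..K] @ \<nu> (K+1) # seg \<nu> (K+2)"
              using seg_split False Kl by auto
            have eqt: "\<nu> (K+1) = \<mu> (K+1)" "seg \<nu> (K+2) = seg \<mu> (K+2)"
              using K(4) Kl unfolding seg_def by (auto simp: map_eq_conv)
            have v: "vld A (\<mu> (K+1) # seg \<mu> (K+2))"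
              using vld_seg[OF pm, of "K+1"] seg_cons[of "K+1" \<mu>] Kl by (simp add: add.assoc)
            have b0: "B (fst (\<mu> (K+1))) (fst (snd (\<mu> (K+1)))) = 0"
            proof -
              have "B (es (\<mu> K)) (es (\<mu> (K + 1))) = 0" using K(4) Kl by blast
              moreover have "er (\<mu> (K+1)) = es (\<mu> K)" using rn(2)[of "K+1"] Kl by simp
              ultimately show ?thesis by (simp add: er_def es_def)
            qed
            obtain c where c: "kep_act A B c (map \<mu> [n..K]) = map \<nu> [n..K]" using rch by blast
            have "kep_act A B c (seg \<mu> n) = seg \<nu> n"
              unfolding sp eqt kepB0[of A "\<mu> (K+1)" "seg \<mu> (K+2)" B c "map \<mu> [n..K]", OF v b0] c ..
            then show ?thesis by blast
          qed
        qed
      qed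
    qed
  qed
qed

end
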